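(* Let $T$ be a recurrent operator on a separable Fréchet space $X$. Then every sequence $\omega\in\mathfrak{C}$ admits a subsequence which is stationary.
   Context: For a continuous linear operator $T$ on a Fréchet space $X$: $x$ is recurrent if $T^{\omega_n}x\to x$ for some strictly increasing sequence $(\omega_n)$ of positive integers; $T$ is recurrent if the set of recurrent vectors is dense. $\mathfrak{C}$ is the set of strictly increasing sequences $\omega=(\omega_n)$ of positive integers such that $T^{\omega_n}x\to x$ for some $x\neq 0$; for $\omega\in\mathfrak{C}$, $\mathfrak{L}(\omega)=\{x\in X:T^{\omega_n}x\to x\}$. A sequence $\omega\in\mathfrak{C}$ is stationary if $\overline{\mathfrak{L}(\omega)}=\overline{\mathfrak{L}(\mu)}$ for every subsequence $\mu$ of $\omega$. *)

theory Defs
  imports "HOL-Analysis.Analysis"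
begin

text \<open>A Frechet space is modelled as a real vector space carrying a countable
  family of seminorms p 0, p 1, ... which separates points and for which the
  induced (metrizable, locally convex) topology is complete.  Complex Frechet
  spaces are in particular real Frechet spaces.\<close>

definition seminorm :: "('a::real_vector \<Rightarrow> real) \<Rightarrow> bool" where
  "seminorm q \<longleftrightarrow> (\<forall>x. 0 \<le> q x) \<and> (\<forall>x y. q (x + y) \<le> q x + q y)
                   \<and> (\<forall>c x. q (c *\<^sub>R x) = \<bar>c\<bar> * q x)"

definition fs_topology :: "(nat \<Rightarrow> 'a::real_vector \<Rightarrow> real) \<Rightarrow> 'a topology" where
  "fs_topology p = topology (\<lambda>U. \<forall>x\<in>U. \<exists>k. \<exists>e>0. {y. \<forall>j\<le>k. p j (y - x) < e} \<subseteq> U)"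

definition fs_cauchy :: "(nat \<Rightarrow> 'a::real_vector \<Rightarrow> real) \<Rightarrow> (nat \<Rightarrow> 'a) \<Rightarrow> bool" where
  "fs_cauchy p xs \<longleftrightarrow> (\<forall>k. \<forall>e>0. \<exists>N. \<forall>m\<ge>N. \<forall>n\<ge>N. p k (xs m - xs n) < e)"

definition frechet_space :: "(nat \<Rightarrow> 'a::real_vector \<Rightarrow> real) \<Rightarrow> bool" where
  "frechet_space p \<longleftrightarrow> (\<forall>k. seminorm (p k))
     \<and> (\<forall>x. (\<forall>k. p k x = 0) \<longrightarrow> x = 0)
     \<and> (\<forall>xs. fs_cauchy p xs \<longrightarrow> (\<exists>x. limitin (fs_topology p) xs x sequentially))"

definition separable_fs :: "(nat \<Rightarrow> 'a::real_vector \<Rightarrow> real) \<Rightarrow> bool" where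
  "separable_fs p \<longleftrightarrow> (\<exists>D. countable D \<and> (fs_topology p) closure_of D = UNIV)"

definition continuous_linear_op :: "(nat \<Rightarrow> 'a::real_vector \<Rightarrow> real) \<Rightarrow> ('a \<Rightarrow> 'a) \<Rightarrow> bool" where
  "continuous_linear_op p T \<longleftrightarrow> linear T \<and> continuous_map (fs_topology p) (fs_topology p) T"

definition pos_strict_seq :: "(nat \<Rightarrow> nat) \<Rightarrow> bool" where
  "pos_strict_seq \<omega> \<longleftrightarrow> strict_mono \<omega> \<and> (\<forall>n. 0 < \<omega> n)"

definition rec_set :: "(nat \<Rightarrow> 'a::real_vector \<Rightarrow> real) \<Rightarrow> ('a \<Rightarrow> 'a) \<Rightarrow> (nat \<Rightarrow> nat) \<Rightarrow> 'a set" where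
  "rec_set p T \<omega> = {x. limitin (fs_topology p) (\<lambda>n. (T ^^ \<omega> n) x) x sequentially}"

definition recurrent_vector :: "(nat \<Rightarrow> 'a::real_vector \<Rightarrow> real) \<Rightarrow> ('a \<Rightarrow> 'a) \<Rightarrow> 'a \<Rightarrow> bool" where
  "recurrent_vector p T x \<longleftrightarrow> (\<exists>\<omega>. pos_strict_seq \<omega> \<and> x \<in> rec_set p T \<omega>)"

definition recurrent_op :: "(nat \<Rightarrow> 'a::real_vector \<Rightarrow> real) \<Rightarrow> ('a \<Rightarrow> 'a) \<Rightarrow> bool" where
  "recurrent_op p T \<longleftrightarrow> (fs_topology p) closure_of {x. recurrent_vector p T x} = UNIV"

definition rec_seqs :: "(nat \<Rightarrow> 'a::real_vector \<Rightarrow> real) \<Rightarrow> ('a \<Rightarrow> 'a) \<Rightarrow> (nat \<Rightarrow> nat) set" where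
  "rec_seqs p T = {\<omega>. pos_strict_seq \<omega> \<and> (\<exists>x. x \<noteq> 0 \<and> x \<in> rec_set p T \<omega>)}"

text \<open>Subsequences of \<omega> are exactly \<omega> \<circ> r with r strictly increasing.\<close>
definition stationary :: "(nat \<Rightarrow> 'a::real_vector \<Rightarrow> real) \<Rightarrow> ('a \<Rightarrow> 'a) \<Rightarrow> (nat \<Rightarrow> nat) \<Rightarrow> bool" where
  "stationary p T \<omega> \<longleftrightarrow> \<omega> \<in> rec_seqs p T \<and>
     (\<forall>r. strict_mono r \<longrightarrow>
        (fs_topology p) closure_of (rec_set p T \<omega>) = (fs_topology p) closure_of (rec_set p T (\<omega> \<circ> r)))"

end

theory Submission
  imports Defs "HOL-Library.Diagonal_Subsequence"
begin

definition fball :: "(nat \<Rightarrow> 'a::real_vector \<Rightarrow> real) \<Rightarrow> nat \<Rightarrow> real \<Rightarrow> 'a \<Rightarrow> 'a set" where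
  "fball p k e x = {y. \<forall>j\<le>k. p j (y - x) < e}"

lemma fs_istopology:
  fixes p :: "nat \<Rightarrow> 'a::real_vector \<Rightarrow> real"
  shows "istopology (\<lambda>U. \<forall>x\<in>U. \<exists>k. \<exists>e>0. {y. \<forall>j\<le>k. p j (y - x) < e} \<subseteq> U)"
  unfolding istopology_def
proof (intro conjI allI impI)
  fix S T :: "'a set"
  assume S: "\<forall>x\<in>S. \<exists>k. \<exists>e>0. {y. \<forall>j\<le>k. p j (y - x) < e} \<subseteq> S"
    and T: "\<forall>x\<in>T. \<exists>k. \<exists>e>0. {y. \<forall>j\<le>k. p j (y - x) < e} \<subseteq> T"
  show "\<forall>x\<in>S \<inter> T. \<exists>k. \<exists>e>0. {y. \<forall>j\<le>k. p j (y - x) < e} \<subseteq> S \<inter> T"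
  proof
    fix x assume "x \<in> S \<inter> T"
    then have "x \<in> S" "x \<in> T" by auto
    obtain k1 e1 where e1: "e1 > 0" and s1: "{y. \<forall>j\<le>k1. p j (y - x) < e1} \<subseteq> S"
      using bspec[OF S \<open>x \<in> S\<close>] by (elim exE conjE) (rule that; assumption)
    obtain k2 e2 where e2: "e2 > 0" and s2: "{y. \<forall>j\<le>k2. p j (y - x) < e2} \<subseteq> T"
      using bspec[OF T \<open>x \<in> T\<close>] by (elim exE conjE) (rule that; assumption)
    have "{y. \<forall>j\<le>max k1 k2. p j (y - x) < min e1 e2} \<subseteq> S \<inter> T"
    proof
      fix y assume y: "y \<in> {y. \<forall>j\<le>max k1 k2. p j (y - x) < min e1 e2}"
      have "y \<in> {y. \<forall>j\<le>k1. p j (y - x) < e1}"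
      proof (intro CollectI allI impI)
        fix j assume "j \<le> k1"
        then have "j \<le> max k1 k2" by simp
        then have "p j (y - x) < min e1 e2" using y by simp
        then show "p j (y - x) < e1" by linarith
      qed
      moreover have "y \<in> {y. \<forall>j\<le>k2. p j (y - x) < e2}"
      proof (intro CollectI allI impI)
        fix j assume "j \<le> k2"
        then have "j \<le> max k1 k2" by simp
        then have "p j (y - x) < min e1 e2" using y by simp
        then show "p j (y - x) < e2" by linarith
      qed
      ultimately show "y \<in> S \<inter> T" using s1 s2 by blast
    qed
    moreover have "min e1 e2 > 0" using e1 e2 by simp
    ultimately show "\<exists>k. \<exists>e>0. {y. \<forall>j\<le>k. p j (y - x) < e} \<subseteq> S \<inter> T" by blast
  qed
next
  fix K :: "'a set set"
  assume K: "\<forall>K\<in>K. \<forall>x\<in>K. \<exists>k. \<exists>e>0. {y. \<forall>j\<le>k. p j (y - x) < e} \<subseteq> K"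
  show "\<forall>x\<in>\<Union>K. \<exists>k. \<exists>e>0. {y. \<forall>j\<le>k. p j (y - x) < e} \<subseteq> \<Union>K"
  proof
    fix x assume "x \<in> \<Union>K"
    then obtain K0 where "K0 \<in> K" "x \<in> K0" by blast
    then obtain k e where "e > 0" "{y. \<forall>j\<le>k. p j (y - x) < e} \<subseteq> K0" using K by blast
    moreover have "K0 \<subseteq> \<Union>K" using \<open>K0 \<in> K\<close> by blast
    ultimately show "\<exists>k. \<exists>e>0. {y. \<forall>j\<le>k. p j (y - x) < e} \<subseteq> \<Union>K" by blast
  qed
qed

lemma openin_fs:
  "openin (fs_topology p) U \<longleftrightarrow> (\<forall>x\<in>U. \<exists>k. \<exists>e>0. fball p k e x \<subseteq> U)"
  by (simp only: fs_topology_def fball_def topology_inverse'[OF fs_istopology])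

lemma topspace_fs: "topspace (fs_topology p) = UNIV"
proof -
  have "openin (fs_topology p) UNIV" unfolding openin_fs by (auto intro: exI[of _ 1])
  then show ?thesis by (metis openin_subset top.extremum_unique)
qed

lemma seminorm_diff:
  assumes "seminorm q" shows "q (z - x) \<le> q (z - y) + q (y - x)"
proof -
  have "q ((z - y) + (y - x)) \<le> q (z - y) + q (y - x)" using assms unfolding seminorm_def by blast
  then show ?thesis by simp
qed

lemma seminorm_sym:
  assumes "seminorm q" shows "q (x - y) = q (y - x)"
proof -
  have "q ((-1) *\<^sub>R (y - x)) = \<bar>-1\<bar> * q (y - x)" using assms unfolding seminorm_def by blast
  then show ?thesis by simp
qed

lemma fball_open:
  assumes "\<forall>k. seminorm (p k)"
  shows "openin (fs_topology p) (fball p k e x)"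
  unfolding openin_fs
proof
  fix y assume y: "y \<in> fball p k e x"
  define M where "M = Max ((\<lambda>j. p j (y - x)) ` {..k})"
  have "M \<in> (\<lambda>j. p j (y - x)) ` {..k}" unfolding M_def by (intro Max_in) auto
  then have Me: "M < e" using y unfolding fball_def by auto
  have Mj: "p j (y - x) \<le> M" if "j \<le> k" for j unfolding M_def using that by (intro Max_ge) auto
  have "fball p k (e - M) y \<subseteq> fball p k e x"
  proof
    fix z assume z: "z \<in> fball p k (e - M) y"
    show "z \<in> fball p k e x" unfolding fball_def
    proof (intro CollectI allI impI)
      fix j assume "j \<le> k"
      then have "p j (z - x) \<le> p j (z - y) + p j (y - x)" "p j (z - y) < e - M" "p j (y - x) \<le> M"
        using seminorm_diff[of "p j"] assms z Mj unfolding fball_def by auto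
      then show "p j (z - x) < e" by linarith
    qed
  qed
  then show "\<exists>k' e'. e' > 0 \<and> fball p k' e' y \<subseteq> fball p k e x" using Me
    by (intro exI[of _ k] exI[of _ "e - M"]) auto
qed

lemma fball_center:
  assumes "\<forall>k. seminorm (p k)" "e > 0"
  shows "x \<in> fball p k e x"
proof -
  have "p j 0 = 0" for j
  proof -
    have "p j (0 *\<^sub>R x) = \<bar>0\<bar> * p j x" using assms(1) unfolding seminorm_def by blast
    then show ?thesis by simp
  qed
  then show ?thesis using assms(2) unfolding fball_def by simp
qed

lemma countable_base:
  assumes F: "frechet_space p" and S: "separable_fs p"
  shows "\<exists>B::nat \<Rightarrow> 'a::real_vector set. (\<forall>n. openin (fs_topology p) (B n)) \<and>
     (\<forall>U x. openin (fs_topology p) U \<and> x \<in> U \<longrightarrow> (\<exists>n. x \<in> B n \<and> B n \<subseteq> U))"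
proof -
  have sn: "\<forall>k. seminorm (p k)" using F unfolding frechet_space_def by blast
  obtain D where D: "countable D" "(fs_topology p) closure_of D = UNIV"
    using S unfolding separable_fs_def by blast
  define \<B> where "\<B> = (\<lambda>(d, k, m). fball p k (1 / real (Suc m)) d) ` (D \<times> UNIV \<times> (UNIV :: nat set))"
  have cB: "countable \<B>" unfolding \<B>_def using D(1) by auto
  have Dne: "D \<noteq> {}" using D(2) by auto
  then have Bne: "\<B> \<noteq> {}" unfolding \<B>_def by auto
  have opB: "openin (fs_topology p) b" if "b \<in> \<B>" for b
    using that fball_open[OF sn] unfolding \<B>_def by auto
  have base: "\<exists>b\<in>\<B>. x \<in> b \<and> b \<subseteq> U" if U: "openin (fs_topology p) U" "x \<in> U" for U x
  proof -
    obtain k e where ke: "e > 0" "fball p k e x \<subseteq> U" using U unfolding openin_fs by blast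
    obtain m where m: "1 / real (Suc m) < e / 2"
      using ke(1) by (metis half_gt_zero_iff nat_approx_posE)
    have "x \<in> (fs_topology p) closure_of D" using D(2) by simp
    moreover have "x \<in> fball p k (1 / real (Suc m)) x" by (rule fball_center[OF sn]) simp
    ultimately obtain d where d: "d \<in> D" "d \<in> fball p k (1 / real (Suc m)) x"
      using fball_open[OF sn] unfolding in_closure_of by blast
    have "x \<in> fball p k (1 / real (Suc m)) d"
      unfolding fball_def
    proof (intro CollectI allI impI)
      fix j assume "j \<le> k"
      have "p j (x - d) = p j (d - x)" using seminorm_sym[of "p j" x d] sn by blast
      moreover have "p j (d - x) < 1 / real (Suc m)"
        using d(2) \<open>j \<le> k\<close> unfolding fball_def by blast
      ultimately show "p j (x - d) < 1 / real (Suc m)" by simp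
    qed
    moreover have "fball p k (1 / real (Suc m)) d \<subseteq> fball p k e x"
    proof
      fix z assume z: "z \<in> fball p k (1 / real (Suc m)) d"
      show "z \<in> fball p k e x" unfolding fball_def
      proof (intro CollectI allI impI)
        fix j assume "j \<le> k"
        have "p j (z - x) \<le> p j (z - d) + p j (d - x)"
          using seminorm_diff[of "p j" z x d] sn by blast
        moreover have "p j (z - d) < 1 / real (Suc m)"
          using z \<open>j \<le> k\<close> unfolding fball_def by blast
        moreover have "p j (d - x) < 1 / real (Suc m)"
          using d(2) \<open>j \<le> k\<close> unfolding fball_def by blast
        ultimately show "p j (z - x) < e" using m by linarith
      qed
    qed
    moreover have "fball p k (1 / real (Suc m)) d \<in> \<B>" unfolding \<B>_def using d(1) by auto
    ultimately show ?thesis using ke(2) by blast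
  qed
  define B where "B = from_nat_into \<B>"
  have "\<forall>n. openin (fs_topology p) (B n)" unfolding B_def using opB from_nat_into[OF Bne] by blast
  moreover have "\<forall>U x. openin (fs_topology p) U \<and> x \<in> U \<longrightarrow> (\<exists>n. x \<in> B n \<and> B n \<subseteq> U)"
  proof (intro allI impI)
    fix U x assume "openin (fs_topology p) U \<and> x \<in> U"
    then obtain b where "b \<in> \<B>" "x \<in> b" "b \<subseteq> U" using base by blast
    then show "\<exists>n. x \<in> B n \<and> B n \<subseteq> U" unfolding B_def
      by (intro exI[of _ "to_nat_on \<B> b"]) (simp add: from_nat_into_to_nat_on[OF cB])
  qed
  ultimately show ?thesis by blast
qed

lemma rec_set_sub:
  assumes "strict_mono r" shows "rec_set p T \<sigma> \<subseteq> rec_set p T (\<sigma> \<circ> r)"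
proof
  fix x assume "x \<in> rec_set p T \<sigma>"
  then have "limitin (fs_topology p) ((\<lambda>n. (T ^^ \<sigma> n) x) \<circ> r) x sequentially"
    unfolding rec_set_def by (intro limitin_subsequence[OF assms]) simp
  then show "x \<in> rec_set p T (\<sigma> \<circ> r)" unfolding rec_set_def by (simp add: o_def)
qed

lemma rec_set_tail1:
  "rec_set p T \<sigma> \<subseteq> rec_set p T (\<lambda>i. \<sigma> (i + k))"
proof
  fix x assume "x \<in> rec_set p T \<sigma>"
  then have "limitin (fs_topology p) (\<lambda>n. (T ^^ \<sigma> n) x) x sequentially" unfolding rec_set_def by simp
  then have "limitin (fs_topology p) (\<lambda>i. (T ^^ \<sigma> (i + k)) x) x sequentially"
    by (rule limitin_sequentially_offset)
  then show "x \<in> rec_set p T (\<lambda>i. \<sigma> (i + k))" unfolding rec_set_def by simp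
qed

lemma rec_set_tail2:
  "rec_set p T (\<lambda>i. \<sigma> (i + k)) \<subseteq> rec_set p T \<sigma>"
proof
  fix x assume "x \<in> rec_set p T (\<lambda>i. \<sigma> (i + k))"
  then have "limitin (fs_topology p) (\<lambda>i. (T ^^ \<sigma> (i + k)) x) x sequentially" unfolding rec_set_def by simp
  then have "limitin (fs_topology p) (\<lambda>n. (T ^^ \<sigma> n) x) x sequentially"
    by (rule limitin_sequentially_offset_rev)
  then show "x \<in> rec_set p T \<sigma>" unfolding rec_set_def by simp
qed

lemma subseqs_P:
  fixes L :: "(nat \<Rightarrow> nat) \<Rightarrow> 'a set" and B :: "nat \<Rightarrow> 'a set"
  shows "subseqs (\<lambda>k s. L s \<inter> B k \<noteq> {} \<or> (\<forall>r. strict_mono r \<longrightarrow> L (s \<circ> r) \<inter> B k = {}))"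
proof (unfold_locales)
  fix n and s :: "nat \<Rightarrow> nat"
  show "\<exists>r'. strict_mono r' \<and> (L (s \<circ> r') \<inter> B n \<noteq> {} \<or> (\<forall>r. strict_mono r \<longrightarrow> L (s \<circ> r' \<circ> r) \<inter> B n = {}))"
  proof (cases "\<exists>r. strict_mono r \<and> L (s \<circ> r) \<inter> B n \<noteq> {}")
    case True
    then show ?thesis by blast
  next
    case False
    have "strict_mono (id :: nat \<Rightarrow> nat)" by (simp add: strict_mono_def)
    moreover have "\<forall>r. strict_mono r \<longrightarrow> L (s \<circ> id \<circ> r) \<inter> B n = {}" using False by auto
    ultimately show ?thesis by blast
  qed
qed

lemma diag_main:
  fixes L :: "(nat \<Rightarrow> nat) \<Rightarrow> 'a set" and B :: "nat \<Rightarrow> 'a set"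
  assumes mono: "\<And>s r. strict_mono r \<Longrightarrow> L s \<subseteq> L (s \<circ> r)"
    and tail: "\<And>s k. L (s \<circ> (+) k) \<subseteq> L s"
  shows "\<exists>d. strict_mono d \<and> (\<forall>r k. strict_mono r \<longrightarrow> L (d \<circ> r) \<inter> B k \<noteq> {} \<longrightarrow> L d \<inter> B k \<noteq> {})"
proof -
  define P where "P = (\<lambda>k s. L s \<inter> B k \<noteq> {} \<or> (\<forall>r. strict_mono r \<longrightarrow> L (s \<circ> r) \<inter> B k = {}))"
  interpret S: subseqs P unfolding P_def by (rule subseqs_P)
  define d where "d = S.diagseq"
  have dm: "strict_mono d" unfolding d_def by (rule S.subseq_diagseq)
  have Pk: "P k (d \<circ> ((+) (Suc k)))" for k unfolding d_def
  proof (rule S.diagseq_holds)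
    fix r s :: "nat \<Rightarrow> nat" and n assume r: "strict_mono r" and Pns: "P n s"
    show "P n (s \<circ> r)"
    proof (cases "L s \<inter> B n \<noteq> {}")
      case True
      moreover have "L s \<subseteq> L (s \<circ> r)" by (rule mono[OF r])
      ultimately have "L (s \<circ> r) \<inter> B n \<noteq> {}" by blast
      then show ?thesis unfolding P_def by (rule disjI1)
    next
      case False
      then have H: "\<forall>r. strict_mono r \<longrightarrow> L (s \<circ> r) \<inter> B n = {}"
        using Pns unfolding P_def by (elim disjE) simp_all
      have "L (s \<circ> r \<circ> r') \<inter> B n = {}" if "strict_mono r'" for r'
        using H[rule_format, OF strict_mono_o[OF r that]] by (simp add: o_assoc)
      then have "\<forall>r'. strict_mono r' \<longrightarrow> L (s \<circ> r \<circ> r') \<inter> B n = {}" by blast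
      then show ?thesis unfolding P_def by (rule disjI2)
    qed
  qed
  have "L (d \<circ> r) \<inter> B k \<noteq> {} \<Longrightarrow> L d \<inter> B k \<noteq> {}" if r: "strict_mono r" for r k
  proof -
    assume ne: "L (d \<circ> r) \<inter> B k \<noteq> {}"
    define r' where "r' = (\<lambda>i. r (i + Suc k) - Suc k)"
    have rge: "i + Suc k \<le> r (i + Suc k)" for i using seq_suble[OF r] by blast
    have r'm: "strict_mono r'" unfolding strict_mono_def r'_def
    proof (intro allI impI)
      fix a b :: nat assume "a < b"
      then have "r (a + Suc k) < r (b + Suc k)" using r unfolding strict_mono_def by simp
      then show "r (a + Suc k) - Suc k < r (b + Suc k) - Suc k" using rge[of a] by linarith
    qed
    have eq: "d \<circ> (+) (Suc k) \<circ> r' = (d \<circ> r) \<circ> (+) (Suc k)"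
    proof
      fix i
      have "Suc k + (r (i + Suc k) - Suc k) = r (i + Suc k)" using rge[of i] by linarith
      then show "(d \<circ> (+) (Suc k) \<circ> r') i = (d \<circ> r \<circ> (+) (Suc k)) i"
        unfolding r'_def by (simp add: add.commute)
    qed
    have "L (d \<circ> r) \<subseteq> L ((d \<circ> r) \<circ> (+) (Suc k))"
      using mono[of "(+) (Suc k)" "d \<circ> r"] by (simp add: strict_mono_def)
    then have "L (d \<circ> (+) (Suc k) \<circ> r') \<inter> B k \<noteq> {}" using ne unfolding eq by blast
    then have "L (d \<circ> (+) (Suc k)) \<inter> B k \<noteq> {}" using Pk[of k] r'm unfolding P_def by blast
    moreover have "L (d \<circ> (+) (Suc k)) \<subseteq> L d" by (rule tail)
    ultimately show "L d \<inter> B k \<noteq> {}" by blast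
  qed
  then show ?thesis using dm by blast
qed

theorem theorem4p2:
  fixes p :: "nat \<Rightarrow> 'a::real_vector \<Rightarrow> real" and T :: "'a \<Rightarrow> 'a"
  assumes "frechet_space p" and "separable_fs p"
    and "continuous_linear_op p T" and "recurrent_op p T"
    and "\<omega> \<in> rec_seqs p T"
  shows "\<exists>r. strict_mono r \<and> stationary p T (\<omega> \<circ> r)"
proof -
  obtain B :: "nat \<Rightarrow> 'a set" where Bo0: "\<forall>n. openin (fs_topology p) (B n)"
    and Bb0: "\<forall>U x. openin (fs_topology p) U \<and> x \<in> U \<longrightarrow> (\<exists>n. x \<in> B n \<and> B n \<subseteq> U)"
    using countable_base[OF assms(1,2)] by (elim exE conjE)
  have Bo: "\<And>n. openin (fs_topology p) (B n)" using Bo0 by blast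
  have Bb: "\<And>U x. openin (fs_topology p) U \<Longrightarrow> x \<in> U \<Longrightarrow> (\<exists>n. x \<in> B n \<and> B n \<subseteq> U)"
    using Bb0 by blast
  define L where "L = (\<lambda>s. rec_set p T (\<omega> \<circ> s))"
  have mono: "L s \<subseteq> L (s \<circ> r)" if "strict_mono r" for s r :: "nat \<Rightarrow> nat"
    unfolding L_def using rec_set_sub[OF that, of p T "\<omega> \<circ> s"] by (simp add: o_assoc)
  have tail: "L (s \<circ> (+) k) \<subseteq> L s" for s :: "nat \<Rightarrow> nat" and k
  proof -
    have "\<omega> \<circ> (s \<circ> (+) k) = (\<lambda>i. (\<omega> \<circ> s) (i + k))" by (simp add: fun_eq_iff add.commute)
    then show ?thesis unfolding L_def using rec_set_tail2[of p T "\<omega> \<circ> s" k] by simp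
  qed
  obtain d where dm: "strict_mono d"
    and dd: "\<forall>r k. strict_mono r \<longrightarrow> L (d \<circ> r) \<inter> B k \<noteq> {} \<longrightarrow> L d \<inter> B k \<noteq> {}"
    using diag_main[of L B, OF mono tail] by blast
  have om: "pos_strict_seq \<omega>" "\<exists>x. x \<noteq> 0 \<and> x \<in> rec_set p T \<omega>"
    using assms(5) unfolding rec_seqs_def by auto
  have "stationary p T (\<omega> \<circ> d)"
    unfolding stationary_def
  proof (intro conjI allI impI)
    have "pos_strict_seq (\<omega> \<circ> d)" using om(1) dm unfolding pos_strict_seq_def
      by (auto intro: strict_mono_o)
    moreover have "\<exists>x. x \<noteq> 0 \<and> x \<in> rec_set p T (\<omega> \<circ> d)"
      using om(2) rec_set_sub[OF dm, of p T \<omega>] by blast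
    ultimately show "\<omega> \<circ> d \<in> rec_seqs p T" unfolding rec_seqs_def by blast
  next
    fix r :: "nat \<Rightarrow> nat" assume r: "strict_mono r"
    have sub: "L d \<subseteq> L (d \<circ> r)" by (rule mono[OF r])
    have "(fs_topology p) closure_of L (d \<circ> r) \<subseteq> (fs_topology p) closure_of L d"
    proof
      fix x assume x: "x \<in> (fs_topology p) closure_of L (d \<circ> r)"
      show "x \<in> (fs_topology p) closure_of L d"
        unfolding in_closure_of topspace_fs
      proof (intro conjI allI impI UNIV_I)
        fix U assume U: "x \<in> U \<and> openin (fs_topology p) U"
        then obtain k where k: "x \<in> B k" "B k \<subseteq> U" using Bb by blast
        have "\<exists>y. y \<in> L (d \<circ> r) \<and> y \<in> B k" using x Bo k(1) unfolding in_closure_of by blast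
        then have "L (d \<circ> r) \<inter> B k \<noteq> {}" by blast
        then have "L d \<inter> B k \<noteq> {}" using dd r by blast
        then show "\<exists>y. y \<in> L d \<and> y \<in> U" using k(2) by blast
      qed
    qed
    then show "(fs_topology p) closure_of rec_set p T (\<omega> \<circ> d) =
          (fs_topology p) closure_of rec_set p T (\<omega> \<circ> d \<circ> r)"
      using closure_of_mono[OF sub] unfolding L_def by (auto simp: o_assoc)
  qed
  then show ?thesis using dm by blast
qed

end
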